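(* Let $k\ge 2$ be an integer and let $F$ be a graph with chromatic number $\chi(F)=k+1$. For every $\varepsilon>0$ there exists $n_0$ such that every $F$-free graph $G$ on $n\ge n_0$ vertices satisfies \[ \sum_{v\in V(G)} d^2(v)\le \left(1-\frac{1}{k}+\varepsilon\right)^2 n^3. \]
   Context: All graphs are finite and simple; $d(v)$ denotes the degree of $v$. A graph is $F$-free if it contains no subgraph isomorphic to $F$. *)

theory Defs
  imports Complex_Main
begin

definition simple_graph :: "'a set \<Rightarrow> ('a \<Rightarrow> 'a \<Rightarrow> bool) \<Rightarrow> bool" where
  "simple_graph V E \<longleftrightarrow> finite V \<and> (\<forall>u v. E u v \<longrightarrow> u \<in> V \<and> v \<in> V)
     \<and> (\<forall>u v. E u v \<longrightarrow> E v u) \<and> (\<forall>v. \<not> E v v)"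

definition degree :: "'a set \<Rightarrow> ('a \<Rightarrow> 'a \<Rightarrow> bool) \<Rightarrow> 'a \<Rightarrow> nat" where
  "degree V E v = card {u \<in> V. E v u}"

definition proper_colouring :: "'a set \<Rightarrow> ('a \<Rightarrow> 'a \<Rightarrow> bool) \<Rightarrow> nat \<Rightarrow> ('a \<Rightarrow> nat) \<Rightarrow> bool" where
  "proper_colouring V E k c \<longleftrightarrow> (\<forall>v\<in>V. c v < k) \<and> (\<forall>u\<in>V. \<forall>v\<in>V. E u v \<longrightarrow> c u \<noteq> c v)"

definition colourable :: "'a set \<Rightarrow> ('a \<Rightarrow> 'a \<Rightarrow> bool) \<Rightarrow> nat \<Rightarrow> bool" where
  "colourable V E k \<longleftrightarrow> (\<exists>c. proper_colouring V E k c)"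

definition chromatic_number :: "'a set \<Rightarrow> ('a \<Rightarrow> 'a \<Rightarrow> bool) \<Rightarrow> nat" where
  "chromatic_number V E = (LEAST k. colourable V E k)"

definition contains_subgraph ::
  "'a set \<Rightarrow> ('a \<Rightarrow> 'a \<Rightarrow> bool) \<Rightarrow> 'b set \<Rightarrow> ('b \<Rightarrow> 'b \<Rightarrow> bool) \<Rightarrow> bool" where
  "contains_subgraph VF EF VG EG \<longleftrightarrow> (\<exists>f. inj_on f VF \<and> f ` VF \<subseteq> VG \<and>
      (\<forall>u\<in>VF. \<forall>v\<in>VF. EF u v \<longrightarrow> EG (f u) (f v)))"

definition free :: "'a set \<Rightarrow> ('a \<Rightarrow> 'a \<Rightarrow> bool) \<Rightarrow> 'b set \<Rightarrow> ('b \<Rightarrow> 'b \<Rightarrow> bool) \<Rightarrow> bool" where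
  "free VF EF VG EG \<longleftrightarrow> \<not> contains_subgraph VF EF VG EG"

end

theory Submission
  imports Defs
begin



lemma pigeon:
  assumes "finite A" "finite B" "f ` A \<subseteq> B" "card B * t < card A"
  shows "\<exists>b\<in>B. t < card {a\<in>A. f a = b}"
proof (rule ccontr)
  assume "\<not> ?thesis"
  hence le: "\<forall>b\<in>B. card {a\<in>A. f a = b} \<le> t" by auto
  have "A = (\<Union>b\<in>B. {a\<in>A. f a = b})" using assms(3) by auto
  hence "card A = card (\<Union>b\<in>B. {a\<in>A. f a = b})" by simp
  also have "\<dots> = (\<Sum>b\<in>B. card {a\<in>A. f a = b})"
    using assms(1,2) by (intro card_UN_disjoint) auto
  also have "\<dots> \<le> (\<Sum>b\<in>B. t)" using le by (intro sum_mono) auto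
  also have "\<dots> = card B * t" by simp
  finally show False using assms(4) by simp
qed



definition wdeg :: "('b \<Rightarrow> 'b \<Rightarrow> bool) \<Rightarrow> 'b set \<Rightarrow> ('b \<Rightarrow> real) \<Rightarrow> 'b \<Rightarrow> real" where
  "wdeg E S w v = (\<Sum>u\<in>S. if E v u then w u else 0)"

definition blowup :: "('b \<Rightarrow> 'b \<Rightarrow> bool) \<Rightarrow> 'b set \<Rightarrow> nat \<Rightarrow> nat \<Rightarrow> bool" where
  "blowup E S r t \<longleftrightarrow> (\<exists>X. (\<forall>i\<le>r. X i \<subseteq> S \<and> card (X i) = t) \<and>
     (\<forall>i\<le>r. \<forall>j\<le>r. i \<noteq> j \<longrightarrow> X i \<inter> X j = {} \<and> (\<forall>x\<in>X i. \<forall>y\<in>X j. E x y)))"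

lemma blowup_zero: "blowup E S r 0"
  unfolding blowup_def by (rule exI[of _ "\<lambda>_. {}"]) auto

lemma sum_le_card_bound:
  fixes w :: "'b \<Rightarrow> real"
  assumes "finite S" "\<forall>v\<in>S. w v \<le> c"
  shows "sum w S \<le> real (card S) * c"
proof -
  have "sum w S \<le> (\<Sum>v\<in>S. c)" using assms by (intro sum_mono) auto
  thus ?thesis by simp
qed

lemma wes_base:
  fixes w :: "'b \<Rightarrow> real"
  assumes "finite S" "\<forall>v\<in>S. w v \<le> (1 / (real t + 1)) * sum w S" "0 < sum w S"
  shows "blowup E S 0 t"
proof -
  have "sum w S \<le> real (card S) * ((1 / (real t + 1)) * sum w S)"
    using sum_le_card_bound[OF assms(1,2)] .
  hence "(real t + 1) * sum w S \<le> real (card S) * sum w S"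
    by (simp add: field_simps)
  hence "real t + 1 \<le> real (card S)" using assms(3) by (meson mult_right_le_imp_le)
  hence "t \<le> card S" by linarith
  then obtain X0 where "X0 \<subseteq> S" "card X0 = t" by (metis obtain_subset_with_card_n)
  thus ?thesis unfolding blowup_def by (intro exI[of _ "\<lambda>_. X0"]) auto
qed




lemma sum_if_card:
  fixes c :: real
  assumes "finite A"
  shows "(\<Sum>x\<in>A. if P x then c else 0) = real (card {x\<in>A. P x}) * c"
proof -
  have "(\<Sum>x\<in>A. if P x then c else 0) = (\<Sum>x\<in>{x\<in>A. P x}. c)"
    using assms by (simp add: sum.inter_filter[symmetric])
  thus ?thesis by simp
qed

lemma wes_step:
  fixes w :: "'b \<Rightarrow> real" and \<delta> \<eta> :: real
  assumes d: "\<delta> > 0" and tpos: "t > 0"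
    and Tdef: "T = t * (nat \<lceil>2/\<delta>\<rceil> + 1)"
    and G: "simple_graph V E" and SV: "S \<subseteq> V"
    and X1: "\<forall>i\<le>r. X i \<subseteq> S \<and> card (X i) = T"
    and X2: "\<forall>i\<le>r. \<forall>j\<le>r. i \<noteq> j \<longrightarrow> X i \<inter> X j = {} \<and> (\<forall>x\<in>X i. \<forall>y\<in>X j. E x y)"
    and wb: "\<forall>v\<in>S. 0 \<le> w v \<and> w v \<le> \<eta> * sum w S" and Wpos: "0 < sum w S"
    and eta: "\<eta> \<le> \<delta> / (2 * (real ((r+1)*T + 2^((r+1)*T) * t) + 1))"
    and deg: "\<forall>v\<in>S. (1 - 1/real (Suc r) + \<delta>) * sum w S \<le> wdeg E S w v"
  shows "blowup E S (Suc r) t"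
proof -
  define Ws where "Ws = sum w S"
  have finV: "finite V" and symE: "\<And>u v. E u v \<Longrightarrow> E v u"
    using G unfolding simple_graph_def by auto
  have finS: "finite S" using finV SV finite_subset by blast
  have finX: "\<And>i. i \<le> r \<Longrightarrow> finite (X i)" using X1 finS finite_subset by blast
  have Tge: "real t * 2 / \<delta> \<le> real T"
  proof -
    have "2/\<delta> \<le> real (nat \<lceil>2/\<delta>\<rceil> + 1)" by linarith
    hence "real t * (2/\<delta>) \<le> real t * real (nat \<lceil>2/\<delta>\<rceil> + 1)"
      by (intro mult_left_mono) auto
    moreover have "real T = real t * real (nat \<lceil>2/\<delta>\<rceil> + 1)" using Tdef by (simp only: of_nat_mult)
    ultimately show ?thesis by simp
  qed
  have Tpos: "T > 0" using Tdef tpos by simp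
  have tle: "real t \<le> real T * \<delta> / 2" using Tge d by (simp add: field_simps)
  define m where "m u i = card {x\<in>X i. E x u}" for u i
  define Good where "Good = {u\<in>S. \<forall>i\<le>r. t \<le> m u i}"
  have GoodS: "Good \<subseteq> S" unfolding Good_def by auto
  define A where "A = (\<Sum>i\<le>r. \<Sum>x\<in>X i. wdeg E S w x)"
  have A_lower: "(real r * real T + real (r+1) * real T * \<delta>) * Ws \<le> A"
  proof -
    have "(real r * real T + real (r+1) * real T * \<delta>) * Ws
        = real (r+1) * real T * ((1 - 1/real (Suc r) + \<delta>) * Ws)"
      by (simp add: field_simps)
    also have "\<dots> = (\<Sum>i\<le>r. \<Sum>x\<in>X i. (1 - 1/real (Suc r) + \<delta>) * Ws)"
      using X1 by simp
    also have "\<dots> \<le> A"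
      unfolding A_def Ws_def using deg X1 by (intro sum_mono) blast
    finally show ?thesis .
  qed
  have A_eq: "A = (\<Sum>u\<in>S. w u * (\<Sum>i\<le>r. real (m u i)))"
  proof -
    have "A = (\<Sum>i\<le>r. \<Sum>x\<in>X i. \<Sum>u\<in>S. if E x u then w u else 0)"
      unfolding A_def wdeg_def by simp
    also have "\<dots> = (\<Sum>i\<le>r. \<Sum>u\<in>S. \<Sum>x\<in>X i. if E x u then w u else 0)"
      by (intro sum.cong refl sum.swap)
    also have "\<dots> = (\<Sum>i\<le>r. \<Sum>u\<in>S. w u * real (m u i))"
      using finX by (intro sum.cong refl) (simp add: sum_if_card m_def)
    also have "\<dots> = (\<Sum>u\<in>S. \<Sum>i\<le>r. w u * real (m u i))"
      by (rule sum.swap)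
    also have "\<dots> = (\<Sum>u\<in>S. w u * (\<Sum>i\<le>r. real (m u i)))"
      by (simp add: sum_distrib_left)
    finally show ?thesis .
  qed
  have mle: "m u i \<le> T" if "i \<le> r" for u i
    using X1 that finX[OF that] unfolding m_def by (metis (no_types, lifting) card_mono mem_Collect_eq subsetI)
  have bound: "(\<Sum>i\<le>r. real (m u i)) \<le> real r * real T + real t + (if u \<in> Good then real T else 0)"
    if uS: "u \<in> S" for u
  proof (cases "u \<in> Good")
    case True
    have "(\<Sum>i\<le>r. real (m u i)) \<le> (\<Sum>i\<le>r. real T)" using mle by (intro sum_mono) auto
    thus ?thesis using True by (simp add: field_simps)
  next
    case False
    then obtain i0 where i0: "i0 \<le> r" "m u i0 < t" using uS unfolding Good_def by auto
    have "(\<Sum>i\<le>r. real (m u i)) = real (m u i0) + (\<Sum>i\<in>{..r} - {i0}. real (m u i))"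
      using i0 by (simp add: sum.remove)
    also have "(\<Sum>i\<in>{..r} - {i0}. real (m u i)) \<le> (\<Sum>i\<in>{..r} - {i0}. real T)"
      using mle by (intro sum_mono) auto
    also have "\<dots> = real r * real T" using i0 by simp
    finally show ?thesis using i0 False by simp
  qed
  have A_upper: "A \<le> (real r * real T + real t) * Ws + real T * sum w Good"
  proof -
    have "A \<le> (\<Sum>u\<in>S. w u * (real r * real T + real t + (if u \<in> Good then real T else 0)))"
      unfolding A_eq using bound wb by (intro sum_mono mult_left_mono) auto
    also have "\<dots> = (\<Sum>u\<in>S. w u * (real r * real T + real t)) + (\<Sum>u\<in>S. if u \<in> Good then real T * w u else 0)"
      by (subst sum.distrib[symmetric]) (intro sum.cong refl, simp add: algebra_simps)
    also have "(\<Sum>u\<in>S. if u \<in> Good then real T * w u else 0) = (\<Sum>u\<in>Good. real T * w u)"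
      using finS GoodS by (simp add: sum.inter_filter[symmetric] Good_def)
    finally show ?thesis unfolding Ws_def by (simp add: sum_distrib_left sum_distrib_right mult.commute)
  qed
  have wG: "\<delta> * Ws / 2 \<le> sum w Good"
  proof -
    have "real T * (\<delta> * Ws / 2) \<le> (real (r+1) * real T * \<delta> - real t) * Ws"
    proof -
      have "real T * \<delta> / 2 \<le> real (r+1) * real T * \<delta> - real t"
      proof -
        have "real T * \<delta> \<le> real (r+1) * real T * \<delta>" using d by (simp add: field_simps)
        thus ?thesis using tle by linarith
      qed
      moreover have "Ws \<ge> 0" using Wpos Ws_def by simp
      ultimately have "(real T * \<delta> / 2) * Ws \<le> (real (r+1) * real T * \<delta> - real t) * Ws"
        by (rule mult_right_mono)
      thus ?thesis by (simp add: field_simps)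
    qed
    also have "\<dots> \<le> real T * sum w Good" using A_lower A_upper by (simp add: algebra_simps)
    finally show ?thesis using Tpos by simp
  qed
  define C where "C = real ((r+1)*T + 2^((r+1)*T) * t) + 1"
  have Cpos: "C > 0" unfolding C_def by (simp add: add_pos_nonneg del: of_nat_add of_nat_mult)
  have finG: "finite Good" using finS GoodS finite_subset by blast
  have cardG: "C \<le> real (card Good)"
  proof -
    have "sum w Good \<le> real (card Good) * (\<eta> * Ws)"
      using sum_le_card_bound[OF finG] wb GoodS unfolding Ws_def by blast
    hence "\<delta> * Ws / 2 \<le> (real (card Good) * \<eta>) * Ws" using wG by (simp add: algebra_simps)
    hence "\<delta> / 2 \<le> real (card Good) * \<eta>" using Wpos Ws_def by (simp add: field_simps)
    also have "\<dots> \<le> real (card Good) * (\<delta> / (2 * C))"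
      using eta unfolding C_def by (intro mult_left_mono) auto
    finally have "\<delta> / 2 \<le> real (card Good) * (\<delta> / (2 * C))" .
    hence "\<delta> * C \<le> real (card Good) * \<delta>" using Cpos by (simp add: field_simps)
    thus ?thesis using d by (simp add: mult.commute)
  qed
  define K where "K = (\<Union>i\<le>r. X i)"
  have finK: "finite K" unfolding K_def using finX by auto
  have KS: "K \<subseteq> S" unfolding K_def using X1 by auto
  have cardK: "card K \<le> (r+1)*T"
  proof -
    have "card K \<le> (\<Sum>i\<le>r. card (X i))" unfolding K_def by (rule card_UN_le) simp
    also have "\<dots> = (r+1)*T" using X1 by simp
    finally show ?thesis .
  qed
  define G' where "G' = Good - K"
  have finG': "finite G'" unfolding G'_def using finG by simp
  have cardG': "2^((r+1)*T) * t < card G'"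
  proof -
    have "card Good \<le> card (G' \<union> K)" unfolding G'_def using finG finK by (intro card_mono) auto
    also have "\<dots> \<le> card G' + card K" by (rule card_Un_le)
    finally have "card Good \<le> card G' + card K" .
    thus ?thesis using cardG cardK unfolding C_def by linarith
  qed
  define Y where "Y u i = (SOME Z. Z \<subseteq> {x\<in>X i. E x u} \<and> card Z = t)" for u i
  have Yprop: "Y u i \<subseteq> {x\<in>X i. E x u} \<and> card (Y u i) = t" if "u \<in> Good" "i \<le> r" for u i
  proof -
    have "t \<le> card {x\<in>X i. E x u}" using that unfolding Good_def m_def by auto
    then obtain Z where "Z \<subseteq> {x\<in>X i. E x u}" "card Z = t" by (metis obtain_subset_with_card_n)
    hence "\<exists>Z. Z \<subseteq> {x\<in>X i. E x u} \<and> card Z = t" by blast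
    thus ?thesis unfolding Y_def by (rule someI_ex)
  qed
  define \<phi> where "\<phi> u = (\<Union>i\<le>r. Y u i)" for u
  have YX: "Y u i \<subseteq> X i" if "u \<in> Good" "i \<le> r" for u i
    using Yprop[OF that] by blast
  have phiK: "\<phi> ` G' \<subseteq> Pow K"
  proof
    fix B assume "B \<in> \<phi> ` G'"
    then obtain u where u: "u \<in> G'" "B = \<phi> u" by auto
    hence uG: "u \<in> Good" by (simp add: G'_def)
    show "B \<in> Pow K" using u YX[OF uG] unfolding \<phi>_def K_def by auto
  qed
  have key: "\<phi> u \<inter> X i = Y u i" if "u \<in> Good" "i \<le> r" for u i
  proof
    show "Y u i \<subseteq> \<phi> u \<inter> X i" unfolding \<phi>_def using Yprop[OF that] that by blast
    show "\<phi> u \<inter> X i \<subseteq> Y u i"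
    proof
      fix x assume "x \<in> \<phi> u \<inter> X i"
      then obtain j where j: "j \<le> r" "x \<in> Y u j" "x \<in> X i" unfolding \<phi>_def by auto
      have "x \<in> X j" using YX[OF that(1) j(1)] j(2) by auto
      hence "j = i" using X2 j that by blast
      thus "x \<in> Y u i" using j by simp
    qed
  qed
  have "card (Pow K) \<le> 2^((r+1)*T)" using card_Pow[OF finK] cardK by (simp add: power_increasing)
  hence "card (Pow K) * t \<le> 2^((r+1)*T) * t" by (rule mult_le_mono1)
  hence "card (Pow K) * t < card G'" using cardG' by linarith
  then obtain b where "b \<in> Pow K" and bF: "t < card {u\<in>G'. \<phi> u = b}"
    using pigeon[OF finG' _ phiK] finK by blast
  have "t \<le> card {u\<in>G'. \<phi> u = b}" using bF by simp
  from obtain_subset_with_card_n[OF this]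
  obtain W where WF: "W \<subseteq> {u\<in>G'. \<phi> u = b}" and cardW: "card W = t" .
  have "W \<noteq> {}" using cardW tpos by auto
  then obtain u0 where u0: "u0 \<in> W" by blast
  have WG: "W \<subseteq> Good" and WK: "W \<inter> K = {}" using WF unfolding G'_def by auto
  have Yeq: "Y u i = Y u0 i" if "u \<in> W" "i \<le> r" for u i
  proof -
    have "Y u i = \<phi> u \<inter> X i" using key WG that by auto
    also have "\<dots> = \<phi> u0 \<inter> X i" using WF that u0 by auto
    also have "\<dots> = Y u0 i" using key WG that u0 by auto
    finally show ?thesis .
  qed
  define X' where "X' i = (if i \<le> r then Y u0 i else W)" for i
  show ?thesis unfolding blowup_def
  proof (intro exI[of _ X'] conjI allI impI)
    fix i assume i: "i \<le> Suc r"
    have "W \<subseteq> S" using WG GoodS by blast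
    moreover have "\<And>i. i \<le> r \<Longrightarrow> Y u0 i \<subseteq> S" using X1 YX[of u0] WG u0 by blast
    ultimately show "X' i \<subseteq> S" unfolding X'_def by auto
    show "card (X' i) = t" unfolding X'_def using Yprop[of u0] WG u0 cardW by auto
  next
    fix i j assume i: "i \<le> Suc r" and j: "j \<le> Suc r" and ij: "i \<noteq> j"
    have Yu0: "\<And>i. i \<le> r \<Longrightarrow> Y u0 i \<subseteq> X i" using Yprop[of u0] WG u0 by blast
    have adjW: "\<And>i x y. i \<le> r \<Longrightarrow> x \<in> Y u0 i \<Longrightarrow> y \<in> W \<Longrightarrow> E x y"
    proof -
      fix i x y assume "i \<le> r" "x \<in> Y u0 i" "y \<in> W"
      hence "x \<in> Y y i" using Yeq by auto
      thus "E x y" using Yprop[of y i] WG \<open>y \<in> W\<close> \<open>i \<le> r\<close> by blast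
    qed
    have YK: "\<And>i. i \<le> r \<Longrightarrow> Y u0 i \<subseteq> K" using Yu0 unfolding K_def by blast
    show "X' i \<inter> X' j = {}"
    proof (cases "i \<le> r \<and> j \<le> r")
      case True
      have "X' i \<subseteq> X i" "X' j \<subseteq> X j" using True Yu0 unfolding X'_def by auto
      moreover have "X i \<inter> X j = {}" using X2 True ij by blast
      ultimately show ?thesis by blast
    next
      case False
      hence c: "(i \<le> r \<and> j = Suc r) \<or> (j \<le> r \<and> i = Suc r)" using i j ij by auto
      show ?thesis
      proof (cases "i \<le> r")
        case True
        hence "X' i \<subseteq> K" "X' j = W" using c YK unfolding X'_def by auto
        thus ?thesis using WK by blast
      next
        case False
        hence "X' j \<subseteq> K" "X' i = W" using c YK unfolding X'_def by auto
        thus ?thesis using WK by blast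
      qed
    qed
    show "\<forall>x\<in>X' i. \<forall>y\<in>X' j. E x y"
    proof (cases "i \<le> r \<and> j \<le> r")
      case True
      have "X' i \<subseteq> X i" "X' j \<subseteq> X j" using True Yu0 unfolding X'_def by auto
      moreover have "\<forall>x\<in>X i. \<forall>y\<in>X j. E x y" using X2 True ij by blast
      ultimately show ?thesis by blast
    next
      case False
      hence c: "(i \<le> r \<and> j = Suc r) \<or> (j \<le> r \<and> i = Suc r)" using i j ij by auto
      show ?thesis
      proof (cases "i \<le> r")
        case True
        hence "X' i = Y u0 i" "X' j = W" using c unfolding X'_def by auto
        thus ?thesis using adjW True by simp
      next
        case False
        hence "X' j = Y u0 j" "X' i = W" "j \<le> r" using c unfolding X'_def by auto
        thus ?thesis using adjW symE by simp
      qed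
    qed
  qed
qed

lemma wes:
  fixes \<delta> :: real assumes d: "\<delta> > 0"
  shows "\<exists>\<eta>>0. \<forall>(V::'b set) E S (w::'b \<Rightarrow> real). simple_graph V E \<longrightarrow> S \<subseteq> V \<longrightarrow>
     (\<forall>v\<in>S. 0 \<le> w v \<and> w v \<le> \<eta> * sum w S) \<longrightarrow> 0 < sum w S \<longrightarrow>
     (r = 0 \<or> (\<forall>v\<in>S. (1 - 1/real r + \<delta>) * sum w S \<le> wdeg E S w v)) \<longrightarrow> blowup E S r t"
proof (induction r arbitrary: t)
  case 0
  show ?case
  proof (intro exI[of _ "1/(real t+1)"] conjI allI impI)
    show "0 < 1/(real t+1)" by simp
  next
    fix V :: "'b set" and E S and w :: "'b \<Rightarrow> real"
    assume G: "simple_graph V E" and SV: "S \<subseteq> V"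
      and wb: "\<forall>v\<in>S. 0 \<le> w v \<and> w v \<le> 1/(real t+1) * sum w S" and Wp: "0 < sum w S"
    have "finite S" using G SV unfolding simple_graph_def using finite_subset by blast
    thus "blowup E S 0 t" using wb Wp by (intro wes_base) auto
  qed
next
  case (Suc r)
  show ?case
  proof (cases "t = 0")
    case True
    thus ?thesis using blowup_zero by (intro exI[of _ 1]) auto
  next
    case False
    define T where "T = t * (nat \<lceil>2/\<delta>\<rceil> + 1)"
    obtain \<eta>1 where e1: "\<eta>1 > 0" and H: "\<forall>(V::'b set) E S (w::'b \<Rightarrow> real). simple_graph V E \<longrightarrow> S \<subseteq> V \<longrightarrow>
     (\<forall>v\<in>S. 0 \<le> w v \<and> w v \<le> \<eta>1 * sum w S) \<longrightarrow> 0 < sum w S \<longrightarrow>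
     (r = 0 \<or> (\<forall>v\<in>S. (1 - 1/real r + \<delta>) * sum w S \<le> wdeg E S w v)) \<longrightarrow> blowup E S r T"
      using Suc.IH[of T] by blast
    define \<eta> where "\<eta> = min \<eta>1 (\<delta> / (2 * (real ((r+1)*T + 2^((r+1)*T) * t) + 1)))"
    have epos: "\<eta> > 0" unfolding \<eta>_def using e1 d
      by (simp add: add_pos_nonneg del: of_nat_add of_nat_mult)
    show ?thesis
    proof (intro exI[of _ \<eta>] conjI allI impI)
      show "0 < \<eta>" by (rule epos)
    next
      fix V :: "'b set" and E S and w :: "'b \<Rightarrow> real"
      assume G: "simple_graph V E" and SV: "S \<subseteq> V"
        and wb: "\<forall>v\<in>S. 0 \<le> w v \<and> w v \<le> \<eta> * sum w S" and Wp: "0 < sum w S"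
        and dg: "Suc r = 0 \<or> (\<forall>v\<in>S. (1 - 1/real (Suc r) + \<delta>) * sum w S \<le> wdeg E S w v)"
      have deg': "\<forall>v\<in>S. (1 - 1/real (Suc r) + \<delta>) * sum w S \<le> wdeg E S w v" using dg by simp
      have wb1: "\<forall>v\<in>S. 0 \<le> w v \<and> w v \<le> \<eta>1 * sum w S"
      proof
        fix v assume "v \<in> S"
        hence "0 \<le> w v \<and> w v \<le> \<eta> * sum w S" using wb by blast
        moreover have "\<eta> * sum w S \<le> \<eta>1 * sum w S" using Wp unfolding \<eta>_def
          by (intro mult_right_mono) auto
        ultimately show "0 \<le> w v \<and> w v \<le> \<eta>1 * sum w S" by linarith
      qed
      have dg1: "r = 0 \<or> (\<forall>v\<in>S. (1 - 1/real r + \<delta>) * sum w S \<le> wdeg E S w v)"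
      proof (cases "r = 0")
        case False
        have "1 / real (Suc r) \<le> 1 / real r" using False by (simp add: frac_le)
        hence "(1 - 1/real r + \<delta>) * sum w S \<le> (1 - 1/real (Suc r) + \<delta>) * sum w S"
          using Wp by (intro mult_right_mono) auto
        thus ?thesis using deg' by (meson order_trans)
      qed simp
      have "blowup E S r T" using H G SV wb1 Wp dg1 by blast
      then obtain X where X1: "\<forall>i\<le>r. X i \<subseteq> S \<and> card (X i) = T"
        and X2: "\<forall>i\<le>r. \<forall>j\<le>r. i \<noteq> j \<longrightarrow> X i \<inter> X j = {} \<and> (\<forall>x\<in>X i. \<forall>y\<in>X j. E x y)"
        unfolding blowup_def by blast
      show "blowup E S (Suc r) t"
        by (rule wes_step[OF d _ T_def G SV X1 X2 wb Wp _ deg']) (use False in simp, simp add: \<eta>_def)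
    qed
  qed
qed




definition Pq :: "('b \<Rightarrow> 'b \<Rightarrow> bool) \<Rightarrow> 'b set \<Rightarrow> ('b \<Rightarrow> real) \<Rightarrow> real" where
  "Pq E S w = (\<Sum>a\<in>S. \<Sum>b\<in>S. if E a b then w a * w b else 0)"

lemma Pq_remove:
  assumes G: "simple_graph V E" and SV: "S \<subseteq> V" and v: "v \<in> S"
  shows "Pq E (S - {v}) w = Pq E S w - 2 * w v * wdeg E S w v"
proof -
  have finS: "finite S" using G SV finite_subset unfolding simple_graph_def by blast
  have symE: "\<And>a b. E a b \<Longrightarrow> E b a" and irr: "\<And>a. \<not> E a a" using G unfolding simple_graph_def by auto
  define g where "g a b = (if E a b then w a * w b else 0)" for a b
  have Pq_g: "Pq E S' w = (\<Sum>a\<in>S'. \<Sum>b\<in>S'. g a b)" for S' unfolding Pq_def g_def by simp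
  have gv: "(\<Sum>b\<in>S. g v b) = w v * wdeg E S w v"
    unfolding g_def wdeg_def by (simp add: sum_distrib_left if_distrib cong: if_cong)
  have "(\<Sum>a\<in>S - {v}. g a v) = (\<Sum>a\<in>S - {v}. w v * (if E v a then w a else 0))"
    unfolding g_def using symE by (intro sum.cong refl) (auto simp: mult.commute)
  also have "\<dots> = w v * (\<Sum>a\<in>S - {v}. (if E v a then w a else 0))" by (simp add: sum_distrib_left)
  also have "(\<Sum>a\<in>S - {v}. (if E v a then w a else 0)) = wdeg E S w v"
    unfolding wdeg_def using finS v irr by (simp add: sum.remove)
  finally have gv2: "(\<Sum>a\<in>S - {v}. g a v) = w v * wdeg E S w v" .
  have "Pq E S w = (\<Sum>b\<in>S. g v b) + (\<Sum>a\<in>S - {v}. \<Sum>b\<in>S. g a b)"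
    unfolding Pq_g by (rule sum.remove[OF finS v])
  also have "(\<Sum>a\<in>S - {v}. \<Sum>b\<in>S. g a b) = (\<Sum>a\<in>S - {v}. g a v + (\<Sum>b\<in>S - {v}. g a b))"
    by (intro sum.cong refl) (rule sum.remove[OF finS v])
  also have "\<dots> = (\<Sum>a\<in>S - {v}. g a v) + Pq E (S - {v}) w"
    unfolding Pq_g by (simp add: sum.distrib)
  finally show ?thesis using gv gv2 by simp
qed

lemma deletion:
  fixes w :: "'b \<Rightarrow> real" and \<beta> c :: real
  assumes G: "simple_graph V E" and wpos: "\<forall>v\<in>V. 0 \<le> w v"
    and cw: "\<forall>v\<in>V. \<beta> * (w v)^2 \<le> c * w v"
  shows "S \<subseteq> V \<Longrightarrow> \<exists>S'\<subseteq>S. Pq E S w - \<beta> * (sum w S)^2 - c * sum w S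
            \<le> Pq E S' w - \<beta> * (sum w S')^2 - c * sum w S' \<and>
            (\<forall>v\<in>S'. \<beta> * sum w S' \<le> wdeg E S' w v)"
proof (induction "card S" arbitrary: S rule: less_induct)
  case less
  have finS: "finite S" using G less.prems finite_subset unfolding simple_graph_def by blast
  show ?case
  proof (cases "\<forall>v\<in>S. \<beta> * sum w S \<le> wdeg E S w v")
    case True
    thus ?thesis by blast
  next
    case False
    then obtain v where v: "v \<in> S" and low: "wdeg E S w v < \<beta> * sum w S" by force
    have lt: "card (S - {v}) < card S" using finS v by (meson card_Diff1_less)
    obtain S' where S': "S' \<subseteq> S - {v}"
      and ineq: "Pq E (S - {v}) w - \<beta> * (sum w (S - {v}))^2 - c * sum w (S - {v})
            \<le> Pq E S' w - \<beta> * (sum w S')^2 - c * sum w S'"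
      and dg: "\<forall>v\<in>S'. \<beta> * sum w S' \<le> wdeg E S' w v"
      using less.hyps[OF lt] less.prems by blast
    have Pr: "Pq E (S - {v}) w = Pq E S w - 2 * w v * wdeg E S w v"
      by (rule Pq_remove[OF G less.prems v])
    have sr: "sum w (S - {v}) = sum w S - w v" using finS v by (simp add: sum_diff1)
    have wv: "0 \<le> w v" "\<beta> * (w v)^2 \<le> c * w v" using wpos cw less.prems v by auto
    have "2 * w v * wdeg E S w v \<le> 2 * w v * (\<beta> * sum w S)"
      using low wv(1) by (intro mult_left_mono) auto
    hence "Pq E S w - \<beta> * (sum w S)^2 - c * sum w S
        \<le> Pq E (S - {v}) w - \<beta> * (sum w (S - {v}))^2 - c * sum w (S - {v})"
      unfolding Pr sr using wv(2) by (simp add: power2_eq_square algebra_simps)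
    thus ?thesis using ineq S' dg by (meson Diff_subset order_trans)
  qed
qed


lemma Pq_le_sq:
  assumes "\<forall>v\<in>S. 0 \<le> w v"
  shows "Pq E S w \<le> (sum w S)^2"
proof -
  have "Pq E S w \<le> (\<Sum>a\<in>S. \<Sum>b\<in>S. w a * w b)"
    unfolding Pq_def using assms by (intro sum_mono) auto
  also have "\<dots> = (sum w S)^2" by (simp add: power2_eq_square sum_product)
  finally show ?thesis .
qed

lemma blowup_mono: "blowup E S r t \<Longrightarrow> S \<subseteq> S2 \<Longrightarrow> blowup E S2 r t"
  unfolding blowup_def by blast

lemma dense_blowup:
  fixes \<epsilon> :: real assumes ep: "\<epsilon> > 0"
  shows "\<exists>\<eta>0>0. \<forall>(V::'b set) E (x::'b \<Rightarrow> real). simple_graph V E \<longrightarrow>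
     (\<forall>v\<in>V. 0 \<le> x v \<and> x v \<le> \<eta>0 * sum x V) \<longrightarrow> 0 < sum x V \<longrightarrow>
     (1 - 1/real k + \<epsilon>/2) * (sum x V)^2 \<le> Pq E V x \<longrightarrow> blowup E V k t"
proof -
  have d: "\<epsilon>/4 > 0" using ep by simp
  obtain \<eta> where eta: "\<eta> > 0" and H: "\<forall>(V::'b set) E S (w::'b \<Rightarrow> real). simple_graph V E \<longrightarrow> S \<subseteq> V \<longrightarrow>
     (\<forall>v\<in>S. 0 \<le> w v \<and> w v \<le> \<eta> * sum w S) \<longrightarrow> 0 < sum w S \<longrightarrow>
     (k = 0 \<or> (\<forall>v\<in>S. (1 - 1/real k + \<epsilon>/4) * sum w S \<le> wdeg E S w v)) \<longrightarrow> blowup E S k t"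
    using wes[OF d, of k t] by blast
  define \<beta> where "\<beta> = 1 - 1/real k + \<epsilon>/4"
  have k1: "1/real k \<le> 1" by (cases k) auto
  have bpos: "\<beta> > 0" unfolding \<beta>_def using k1 ep by linarith
  define \<eta>0 where "\<eta>0 = min (\<epsilon>/(8*\<beta>)) (\<eta> * min 1 \<epsilon> / 3)"
  have e0pos: "\<eta>0 > 0" unfolding \<eta>0_def using ep bpos eta by simp
  have be0: "\<beta> * \<eta>0 \<le> \<epsilon>/8"
  proof -
    have "\<beta> * \<eta>0 \<le> \<beta> * (\<epsilon>/(8*\<beta>))" unfolding \<eta>0_def using bpos by (intro mult_left_mono) auto
    thus ?thesis using bpos by simp
  qed
  have e0sq: "\<eta>0^2 * 8 \<le> \<eta>^2 * \<epsilon>"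
  proof -
    have a: "\<eta>0 \<le> \<eta> * min 1 \<epsilon> / 3" unfolding \<eta>0_def by simp
    have "\<eta>0^2 \<le> (\<eta> * min 1 \<epsilon> / 3)^2" using a e0pos by (intro power_mono) auto
    also have "\<dots> = \<eta>^2 * (min 1 \<epsilon> * min 1 \<epsilon>) / 9" by (simp add: power2_eq_square)
    also have "min 1 \<epsilon> * min 1 \<epsilon> \<le> 1 * \<epsilon>" using ep by (intro mult_mono) auto
    hence "\<eta>^2 * (min 1 \<epsilon> * min 1 \<epsilon>) / 9 \<le> \<eta>^2 * \<epsilon> / 9"
      by (intro divide_right_mono mult_left_mono) auto
    finally have "9 * \<eta>0^2 \<le> \<epsilon> * \<eta>^2" using ep by (simp add: field_simps)
    moreover have "0 \<le> \<eta>0^2" by simp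
    ultimately have "8 * \<eta>0^2 \<le> \<epsilon> * \<eta>^2" by linarith
    thus ?thesis by (simp add: mult.commute)
  qed
  show ?thesis
  proof (intro exI[of _ \<eta>0] conjI allI impI)
    show "\<eta>0 > 0" by (rule e0pos)
  next
    fix V :: "'b set" and E and x :: "'b \<Rightarrow> real"
    assume G: "simple_graph V E" and xb: "\<forall>v\<in>V. 0 \<le> x v \<and> x v \<le> \<eta>0 * sum x V"
      and Wp: "0 < sum x V" and dens: "(1 - 1/real k + \<epsilon>/2) * (sum x V)^2 \<le> Pq E V x"
    define W where "W = sum x V"
    define c where "c = \<beta> * \<eta>0 * W"
    have cw: "\<forall>v\<in>V. \<beta> * (x v)^2 \<le> c * x v"
    proof
      fix v assume "v \<in> V"
      hence "0 \<le> x v" "x v \<le> \<eta>0 * W" using xb W_def by auto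
      hence "(\<beta> * x v) * x v \<le> (\<beta> * x v) * (\<eta>0 * W)" using bpos by (intro mult_left_mono) auto
      thus "\<beta> * (x v)^2 \<le> c * x v" unfolding c_def by (simp add: power2_eq_square algebra_simps)
    qed
    have xnn: "\<forall>v\<in>V. 0 \<le> x v" using xb by blast
    obtain S' where S'V: "S' \<subseteq> V"
      and ineq: "Pq E V x - \<beta> * (sum x V)^2 - c * sum x V \<le> Pq E S' x - \<beta> * (sum x S')^2 - c * sum x S'"
      and dg: "\<forall>v\<in>S'. \<beta> * sum x S' \<le> wdeg E S' x v"
      using deletion[OF G xnn cw order_refl] by blast
    have S'nn: "0 \<le> sum x S'" using xb S'V by (intro sum_nonneg) auto
    have Wpos: "W > 0" using Wp W_def by simp
    have lowV: "\<epsilon>/8 * W^2 \<le> Pq E V x - \<beta> * W^2 - c * W"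
    proof -
      have "c * W = (\<beta> * \<eta>0) * W^2" unfolding c_def by (simp add: power2_eq_square)
      also have "\<dots> \<le> \<epsilon>/8 * W^2" using be0 by (intro mult_right_mono) auto
      finally have "c * W \<le> \<epsilon>/8 * W^2" .
      moreover have "(1 - 1/real k + \<epsilon>/2) * W^2 = \<beta> * W^2 + \<epsilon>/4 * W^2"
        unfolding \<beta>_def by (simp add: algebra_simps)
      ultimately show ?thesis using dens W_def by simp
    qed
    have "Pq E S' x - \<beta> * (sum x S')^2 - c * sum x S' \<le> Pq E S' x"
    proof -
      have "0 \<le> \<beta> * (sum x S')^2" using bpos by simp
      moreover have "0 \<le> c * sum x S'" unfolding c_def using bpos e0pos Wpos S'nn by simp
      ultimately show ?thesis by linarith
    qed
    also have "\<dots> \<le> (sum x S')^2" using xb S'V by (intro Pq_le_sq) auto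
    finally have sq: "\<epsilon>/8 * W^2 \<le> (sum x S')^2" using lowV ineq W_def by simp
    have S'pos: "0 < sum x S'"
    proof -
      have "0 < \<epsilon>/8 * W^2" using ep Wpos by simp
      hence "sum x S' \<noteq> 0" using sq by auto
      thus ?thesis using S'nn by simp
    qed
    have xb': "\<forall>v\<in>S'. 0 \<le> x v \<and> x v \<le> \<eta> * sum x S'"
    proof
      fix v assume vS: "v \<in> S'"
      hence x0: "0 \<le> x v" and xv: "x v \<le> \<eta>0 * W" using xb S'V W_def by auto
      have "(x v)^2 \<le> (\<eta>0 * W)^2" using x0 xv by (intro power_mono) auto
      also have "\<dots> = \<eta>0^2 * 8 * (W^2 / 8)" by (simp add: power2_eq_square)
      also have "\<dots> \<le> \<eta>^2 * \<epsilon> * (W^2 / 8)" using e0sq by (intro mult_right_mono) auto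
      also have "\<dots> = \<eta>^2 * (\<epsilon>/8 * W^2)" by simp
      also have "\<dots> \<le> \<eta>^2 * (sum x S')^2" using sq by (intro mult_left_mono) auto
      also have "\<dots> = (\<eta> * sum x S')^2" by (simp add: power_mult_distrib)
      finally have "(x v)^2 \<le> (\<eta> * sum x S')^2" .
      moreover have "0 \<le> \<eta> * sum x S'" using eta S'pos by simp
      ultimately have "x v \<le> \<eta> * sum x S'" by (rule power2_le_imp_le)
      thus "0 \<le> x v \<and> x v \<le> \<eta> * sum x S'" using x0 by simp
    qed
    have dg': "k = 0 \<or> (\<forall>v\<in>S'. (1 - 1/real k + \<epsilon>/4) * sum x S' \<le> wdeg E S' x v)"
      using dg unfolding \<beta>_def by blast
    have "blowup E S' k t"
      using xb' by (intro H[rule_format, OF G S'V _ S'pos dg']) blast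
    thus "blowup E V k t" using S'V by (rule blowup_mono)
  qed
qed




lemma sum_if_mult:
  fixes f :: "'b \<Rightarrow> real"
  assumes "finite V"
  shows "(\<Sum>b\<in>V. if E a b then f a else 0) = f a * real (card {b\<in>V. E a b})"
  using sum_if_card[OF assms, of "E a" "f a"] by (simp add: mult.commute)

lemma spectral:
  fixes V :: "'b set" and \<mu> \<tau> :: real
  assumes G: "simple_graph V E" and npos: "card V > 0" and mupos: "\<mu> > 0"
    and W2: "\<mu>^2 * real (card V) = (\<Sum>v\<in>V. (real (degree V E v))^2)"
    and tau: "\<tau> \<ge> 0" and mu': "\<mu> - \<tau> * real (card V) \<ge> 0"
  shows "\<exists>x. (\<forall>v\<in>V. 0 \<le> x v \<and> x v \<le> 1 + real (card V) / \<mu>) \<and>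
     (\<mu> - \<tau> * real (card V)) * (\<Sum>v\<in>V. (x v)^2) \<le> Pq E V x \<and>
     min ((\<mu> - \<tau> * real (card V)) * real (card V)) (4 * \<tau> * (real (card V))^2) \<le> Pq E V x"
proof -
  define n where "n = real (card V)"
  define m where "m = \<mu> - \<tau> * n"
  define d where "d v = real (degree V E v)" for v
  have finV: "finite V" and symE: "\<And>a b. E a b \<Longrightarrow> E b a" using G unfolding simple_graph_def by auto
  have W2': "(\<Sum>v\<in>V. (d v)^2) = \<mu>^2 * n" using W2 unfolding d_def n_def by simp
  have dle: "d v \<le> n" for v
  proof -
    have "degree V E v \<le> card V" unfolding degree_def using finV by (intro card_mono) auto
    thus ?thesis unfolding d_def n_def by simp
  qed
  have d0: "0 \<le> d v" for v unfolding d_def by simp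
  define p where "p v = 1 + d v / \<mu>" for v
  define q where "q v = 1 - d v / \<mu>" for v
  define aq where "aq v = \<bar>q v\<bar>" for v
  have sumE1: "(\<Sum>a\<in>V. \<Sum>b\<in>V. if E a b then d a else 0) = (\<Sum>a\<in>V. (d a)^2)"
  proof -
    have "(\<Sum>a\<in>V. \<Sum>b\<in>V. if E a b then d a else 0) = (\<Sum>a\<in>V. d a * real (card {b\<in>V. E a b}))"
      using finV by (intro sum.cong refl) (rule sum_if_mult)
    also have "\<dots> = (\<Sum>a\<in>V. (d a)^2)" unfolding d_def degree_def by (simp add: power2_eq_square)
    finally show ?thesis .
  qed
  have sumE2: "(\<Sum>a\<in>V. \<Sum>b\<in>V. if E a b then d b else 0) = (\<Sum>a\<in>V. (d a)^2)"
  proof -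
    have "(\<Sum>a\<in>V. \<Sum>b\<in>V. if E a b then d b else 0) = (\<Sum>b\<in>V. \<Sum>a\<in>V. if E a b then d b else 0)"
      by (rule sum.swap)
    also have "\<dots> = (\<Sum>b\<in>V. \<Sum>a\<in>V. if E b a then d b else 0)"
      using symE by (intro sum.cong refl) (metis (full_types))
    also have "\<dots> = (\<Sum>a\<in>V. (d a)^2)" by (rule sumE1)
    finally show ?thesis .
  qed
  have F1: "Pq E V p - Pq E V q = 4 * \<mu> * n"
  proof -
    have "Pq E V p - Pq E V q = (\<Sum>a\<in>V. \<Sum>b\<in>V. (2/\<mu>) * ((if E a b then d a else 0) + (if E a b then d b else 0)))"
      unfolding Pq_def sum_subtractf[symmetric]
      using mupos by (intro sum.cong refl) (simp add: p_def q_def field_simps)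
    also have "\<dots> = (2/\<mu>) * ((\<Sum>a\<in>V. \<Sum>b\<in>V. if E a b then d a else 0) + (\<Sum>a\<in>V. \<Sum>b\<in>V. if E a b then d b else 0))"
      by (simp only: distrib_left sum_distrib_left sum.distrib)
    also have "\<dots> = (2/\<mu>) * (2 * (\<mu>^2 * n))" unfolding sumE1 sumE2 W2' by simp
    also have "\<dots> = 4 * \<mu> * n" using mupos by (simp add: power2_eq_square field_simps)
    finally show ?thesis .
  qed
  have F2: "(\<Sum>v\<in>V. (p v)^2) + (\<Sum>v\<in>V. (q v)^2) = 4 * n"
  proof -
    have "(\<Sum>v\<in>V. (p v)^2) + (\<Sum>v\<in>V. (q v)^2) = (\<Sum>v\<in>V. 2 + (2/\<mu>^2) * (d v)^2)"
      unfolding sum.distrib[symmetric]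
      using mupos by (intro sum.cong refl) (simp add: p_def q_def power2_eq_square field_simps)
    also have "\<dots> = 2 * n + (2/\<mu>^2) * (\<mu>^2 * n)"
      unfolding sum.distrib sum_distrib_left[symmetric] W2' n_def by simp
    also have "\<dots> = 4 * n" using mupos by simp
    finally show ?thesis .
  qed
  have pge: "1 \<le> p v" for v unfolding p_def using d0 mupos by simp
  have ple: "p v \<le> 1 + n / \<mu>" for v unfolding p_def using dle mupos by (simp add: divide_right_mono)
  have aqle: "aq v \<le> 1 + n / \<mu>" for v
  proof -
    have "aq v \<le> 1 + d v / \<mu>" unfolding aq_def q_def using d0 mupos by (simp add: abs_le_iff)
    thus ?thesis using ple unfolding p_def by (meson order_trans)
  qed
  have aq_sq: "(\<Sum>v\<in>V. (aq v)^2) = (\<Sum>v\<in>V. (q v)^2)" unfolding aq_def by simp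
  have F5: "- Pq E V q \<le> Pq E V aq"
  proof -
    have "- Pq E V q = (\<Sum>a\<in>V. \<Sum>b\<in>V. - (if E a b then q a * q b else 0))"
      unfolding Pq_def by (simp add: sum_negf)
    also have "\<dots> \<le> Pq E V aq"
      unfolding Pq_def aq_def by (intro sum_mono) (auto simp: abs_mult[symmetric])
    finally show ?thesis .
  qed
  have nn: "n > 0" using npos n_def by simp
  have m0: "m \<ge> 0" using mu' unfolding m_def n_def by simp
  show ?thesis
  proof (cases "m * (\<Sum>v\<in>V. (p v)^2) \<le> Pq E V p")
    case True
    have "(\<Sum>v\<in>V. (1::real)) \<le> (\<Sum>v\<in>V. (p v)^2)"
      using pge by (intro sum_mono) (simp add: one_le_power)
    hence "n \<le> (\<Sum>v\<in>V. (p v)^2)" unfolding n_def by simp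
    hence "m * n \<le> m * (\<Sum>v\<in>V. (p v)^2)" using m0 by (intro mult_left_mono)
    hence "min (m * n) (4 * \<tau> * n^2) \<le> Pq E V p" using True by linarith
    thus ?thesis using True pge ple unfolding m_def n_def
      by (intro exI[of _ p]) (auto intro: order_trans[OF zero_le_one])
  next
    case False
    have "Pq E V q = Pq E V p - 4 * \<mu> * n" using F1 by simp
    also have "\<dots> < m * (\<Sum>v\<in>V. (p v)^2) - 4 * \<mu> * n" using False by simp
    also have "\<dots> = - 4 * \<tau> * n^2 - m * (\<Sum>v\<in>V. (q v)^2)"
    proof -
      have e: "(\<Sum>v\<in>V. (p v)^2) = 4 * n - (\<Sum>v\<in>V. (q v)^2)" using F2 by simp
      show ?thesis unfolding e m_def by (simp add: algebra_simps power2_eq_square)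
    qed
    finally have "4 * \<tau> * n^2 + m * (\<Sum>v\<in>V. (aq v)^2) \<le> Pq E V aq" using F5 aq_sq by simp
    moreover have "0 \<le> 4 * \<tau> * n^2" using tau by simp
    moreover have "0 \<le> m * (\<Sum>v\<in>V. (aq v)^2)" using m0 by (intro mult_nonneg_nonneg sum_nonneg) auto
    ultimately have "m * (\<Sum>v\<in>V. (aq v)^2) \<le> Pq E V aq" "min (m * n) (4 * \<tau> * n^2) \<le> Pq E V aq"
      by linarith+
    thus ?thesis using aqle unfolding m_def n_def
      by (intro exI[of _ aq]) (auto simp: aq_def)
  qed
qed




lemma cauchy_schwarz_sum:
  fixes x :: "'b \<Rightarrow> real"
  shows "(sum x V)^2 \<le> real (card V) * (\<Sum>v\<in>V. (x v)^2)"
proof -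
  have "0 \<le> (\<Sum>a\<in>V. \<Sum>b\<in>V. (x a - x b)^2)" by (intro sum_nonneg) auto
  also have "(\<Sum>a\<in>V. \<Sum>b\<in>V. (x a - x b)^2)
      = (\<Sum>a\<in>V. \<Sum>b\<in>V. (x a)^2) + (\<Sum>a\<in>V. \<Sum>b\<in>V. (x b)^2) - 2 * (\<Sum>a\<in>V. \<Sum>b\<in>V. x a * x b)"
    by (simp add: power2_diff sum.distrib sum_subtractf sum_distrib_left mult.assoc)
  also have "(\<Sum>a\<in>V. \<Sum>b\<in>V. x a * x b) = (sum x V)^2" by (simp add: power2_eq_square sum_product)
  also have "(\<Sum>a\<in>V. \<Sum>b\<in>V. (x a)^2) = real (card V) * (\<Sum>v\<in>V. (x v)^2)"
    by (simp add: sum_distrib_left mult.commute)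
  also have "(\<Sum>a\<in>V. \<Sum>b\<in>V. (x b)^2) = real (card V) * (\<Sum>v\<in>V. (x v)^2)"
    by simp
  finally show ?thesis by simp
qed

lemma colourable_exists:
  assumes "simple_graph VF EF"
  shows "\<exists>m. colourable VF EF m"
proof -
  have fin: "finite VF" and irr: "\<And>v. \<not> EF v v" using assms unfolding simple_graph_def by auto
  obtain h where h: "bij_betw h VF {0..<card VF}" using ex_bij_betw_finite_nat[OF fin] by blast
  have "proper_colouring VF EF (card VF) h"
    unfolding proper_colouring_def
  proof (intro conjI ballI impI)
    fix v assume "v \<in> VF" thus "h v < card VF" using h bij_betwE by fastforce
  next
    fix u v assume "u \<in> VF" "v \<in> VF" "EF u v"
    moreover have "u \<noteq> v" using irr \<open>EF u v\<close> by blast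
    ultimately show "h u \<noteq> h v" using h unfolding bij_betw_def inj_on_def by blast
  qed
  thus ?thesis unfolding colourable_def by blast
qed

lemma embed:
  assumes F: "simple_graph VF EF" and col: "colourable VF EF (Suc k)"
    and B: "blowup EG VG k (card VF)" and finG: "finite VG"
  shows "contains_subgraph VF EF VG EG"
proof -
  obtain c where c1: "\<forall>v\<in>VF. c v < Suc k" and c2: "\<forall>u\<in>VF. \<forall>v\<in>VF. EF u v \<longrightarrow> c u \<noteq> c v"
    using col unfolding colourable_def proper_colouring_def by blast
  obtain X where X1: "\<forall>i\<le>k. X i \<subseteq> VG \<and> card (X i) = card VF"
    and X2: "\<forall>i\<le>k. \<forall>j\<le>k. i \<noteq> j \<longrightarrow> X i \<inter> X j = {} \<and> (\<forall>x\<in>X i. \<forall>y\<in>X j. EG x y)"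
    using B unfolding blowup_def by blast
  have finF: "finite VF" using F unfolding simple_graph_def by auto
  define C where "C i = {v\<in>VF. c v = i}" for i
  have "\<forall>i. \<exists>g. i \<le> k \<longrightarrow> g ` C i \<subseteq> X i \<and> inj_on g (C i)"
  proof
    fix i
    show "\<exists>g. i \<le> k \<longrightarrow> g ` C i \<subseteq> X i \<and> inj_on g (C i)"
    proof (cases "i \<le> k")
      case True
      have "finite (C i)" unfolding C_def using finF by simp
      moreover have "finite (X i)" using X1 True finG finite_subset by blast
      moreover have "card (C i) \<le> card (X i)"
        using X1 True finF unfolding C_def by (simp add: card_mono)
      ultimately obtain g where "g ` C i \<subseteq> X i" "inj_on g (C i)" using card_le_inj by blast
      thus ?thesis by blast
    qed simp
  qed
  then obtain g where g: "\<And>i. i \<le> k \<Longrightarrow> g i ` C i \<subseteq> X i \<and> inj_on (g i) (C i)" by metis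
  define f where "f v = g (c v) v" for v
  have fX: "f v \<in> X (c v)" if "v \<in> VF" for v
  proof -
    have "c v \<le> k" using c1 that by auto
    moreover have "v \<in> C (c v)" unfolding C_def using that by simp
    ultimately show ?thesis unfolding f_def using g by blast
  qed
  have ck: "c v \<le> k" if "v \<in> VF" for v using c1 that by auto
  show ?thesis unfolding contains_subgraph_def
  proof (intro exI[of _ f] conjI)
    show "inj_on f VF"
    proof (rule inj_onI)
      fix u v assume u: "u \<in> VF" and v: "v \<in> VF" and e: "f u = f v"
      have "c u = c v"
      proof (rule ccontr)
        assume "c u \<noteq> c v"
        hence "X (c u) \<inter> X (c v) = {}" using X2 ck u v by blast
        thus False using fX[OF u] fX[OF v] e by auto
      qed
      moreover have "u \<in> C (c u)" "v \<in> C (c u)" unfolding C_def using u v \<open>c u = c v\<close> by auto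
      ultimately show "u = v" using g[OF ck[OF u]] e unfolding f_def inj_on_def by metis
    qed
    show "f ` VF \<subseteq> VG" using fX X1 ck by blast
    show "\<forall>u\<in>VF. \<forall>v\<in>VF. EF u v \<longrightarrow> EG (f u) (f v)"
    proof (intro ballI impI)
      fix u v assume u: "u \<in> VF" and v: "v \<in> VF" and e: "EF u v"
      hence "c u \<noteq> c v" using c2 by blast
      thus "EG (f u) (f v)" using X2 ck[OF u] ck[OF v] fX[OF u] fX[OF v] by blast
    qed
  qed
qed




theorem corollary2p15:
  fixes k :: nat and VF :: "'a set" and EF :: "'a \<Rightarrow> 'a \<Rightarrow> bool" and \<epsilon> :: real
  assumes "k \<ge> 2"
    and "simple_graph VF EF"
    and "chromatic_number VF EF = k + 1"
    and "\<epsilon> > 0"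
  shows "\<exists>n0::nat. \<forall>(VG :: 'b set) EG n. simple_graph VG EG \<longrightarrow> free VF EF VG EG
           \<longrightarrow> card VG = n \<longrightarrow> n \<ge> n0 \<longrightarrow>
           (\<Sum>v\<in>VG. (real (degree VG EG v))\<^sup>2) \<le> (1 - 1 / real k + \<epsilon>)\<^sup>2 * (real n) ^ 3"
proof -
  note k2 = assms(1) and F = assms(2) and chi = assms(3) and ep = assms(4)
  define \<alpha> where "\<alpha> = 1 - 1 / real k"
  have ahalf: "1/2 \<le> \<alpha>"
  proof -
    have "1 / real k \<le> 1 / 2" using k2 by (simp add: frac_le)
    thus ?thesis unfolding \<alpha>_def by simp
  qed
  define t where "t = card VF"
  obtain \<eta>0 where e0: "\<eta>0 > 0" and DB: "\<forall>(V::'b set) E (x::'b \<Rightarrow> real). simple_graph V E \<longrightarrow>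
     (\<forall>v\<in>V. 0 \<le> x v \<and> x v \<le> \<eta>0 * sum x V) \<longrightarrow> 0 < sum x V \<longrightarrow>
     (1 - 1/real k + \<epsilon>/2) * (sum x V)^2 \<le> Pq E V x \<longrightarrow> blowup E V k t"
    using dense_blowup[OF ep, of k t] by blast
  define c0 where "c0 = min (1/2) (2*\<epsilon>)"
  have c0pos: "c0 > 0" unfolding c0_def using ep by simp
  define n0 where "n0 = nat \<lceil>9 / (\<eta>0^2 * c0)\<rceil> + 1"
  have col: "colourable VF EF (Suc k)"
  proof -
    have "colourable VF EF (LEAST m. colourable VF EF m)"
      using colourable_exists[OF F] by (rule LeastI_ex)
    thus ?thesis using chi unfolding chromatic_number_def by simp
  qed
  show ?thesis
  proof (intro exI[of _ n0] allI impI)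
    fix VG :: "'b set" and EG n
    assume G: "simple_graph VG EG" and fr: "free VF EF VG EG" and cn: "card VG = n" and nn: "n0 \<le> n"
    define W2 where "W2 = (\<Sum>v\<in>VG. (real (degree VG EG v))\<^sup>2)"
    show "(\<Sum>v\<in>VG. (real (degree VG EG v))\<^sup>2) \<le> (1 - 1 / real k + \<epsilon>)\<^sup>2 * (real n) ^ 3"
    proof (rule ccontr)
      assume "\<not> ?thesis"
      hence big: "(\<alpha> + \<epsilon>)^2 * (real n)^3 < W2" unfolding W2_def \<alpha>_def by simp
      define nr where "nr = real n"
      have n1: "1 \<le> nr" using nn unfolding n0_def nr_def by simp
      have W2nn: "0 \<le> W2" unfolding W2_def by (intro sum_nonneg) auto
      define \<mu> where "\<mu> = sqrt (W2 / nr)"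
      have nrpos: "0 < nr" using n1 by linarith
      have Wn: "0 \<le> W2 / nr" using W2nn nrpos by (rule divide_nonneg_pos)
      have musq: "\<mu>^2 = W2 / nr" unfolding \<mu>_def using Wn by (rule real_sqrt_pow2)
      have W2eq: "\<mu>^2 * real (card VG) = (\<Sum>v\<in>VG. (real (degree VG EG v))^2)"
        using musq n1 cn unfolding W2_def nr_def by simp
      have mu0: "0 \<le> \<mu>" unfolding \<mu>_def using Wn by simp
      have "((\<alpha> + \<epsilon>) * nr)^2 < \<mu>^2"
      proof -
        have "((\<alpha> + \<epsilon>) * nr)^2 * nr < W2" using big unfolding nr_def
          by (simp add: power2_eq_square power3_eq_cube algebra_simps)
        hence "((\<alpha> + \<epsilon>) * nr)^2 < W2 / nr" using n1 by (simp add: field_simps)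
        thus ?thesis using musq by simp
      qed
      hence mugt: "(\<alpha> + \<epsilon>) * nr < \<mu>" using mu0 by (rule power_less_imp_less_base)
      have mupos: "\<mu> > 0"
      proof -
        have "0 \<le> (\<alpha> + \<epsilon>) * nr" using ahalf ep n1 by simp
        thus ?thesis using mugt by linarith
      qed
      define \<tau> where "\<tau> = \<epsilon> / 2"
      define m where "m = \<mu> - \<tau> * nr"
      have mge: "(\<alpha> + \<epsilon>/2) * nr \<le> m" using mugt unfolding m_def \<tau>_def by (simp add: algebra_simps)
      have m0: "0 \<le> m"
      proof -
        have "0 \<le> (\<alpha> + \<epsilon>/2) * nr" using ahalf ep n1 by simp
        thus ?thesis using mge by linarith
      qed
      obtain x where xb: "\<forall>v\<in>VG. 0 \<le> x v \<and> x v \<le> 1 + real (card VG) / \<mu>"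
        and q1: "(\<mu> - \<tau> * real (card VG)) * (\<Sum>v\<in>VG. (x v)^2) \<le> Pq EG VG x"
        and q2: "min ((\<mu> - \<tau> * real (card VG)) * real (card VG)) (4 * \<tau> * (real (card VG))^2) \<le> Pq EG VG x"
        using spectral[OF G _ mupos W2eq, of \<tau>] n1 cn m0 ep unfolding m_def nr_def \<tau>_def by auto
      have q1': "m * (\<Sum>v\<in>VG. (x v)^2) \<le> Pq EG VG x" using q1 cn unfolding m_def nr_def by simp
      have q2': "min (m * nr) (4 * \<tau> * nr^2) \<le> Pq EG VG x" using q2 cn unfolding m_def nr_def by simp
      have x3: "\<forall>v\<in>VG. 0 \<le> x v \<and> x v \<le> 3"
      proof
        fix v assume "v \<in> VG"
        hence a: "0 \<le> x v" "x v \<le> 1 + nr / \<mu>" using xb cn unfolding nr_def by auto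
        have "(1/2) * nr \<le> (\<alpha> + \<epsilon>) * nr" using ahalf ep n1 by (intro mult_right_mono) auto
        hence "nr \<le> 2 * \<mu>" using mugt by linarith
        hence "nr / \<mu> \<le> 2" using mupos by (simp add: field_simps)
        thus "0 \<le> x v \<and> x v \<le> 3" using a by linarith
      qed
      define Sx where "Sx = sum x VG"
      have Sx0: "0 \<le> Sx" unfolding Sx_def using x3 by (intro sum_nonneg) auto
      have sq0: "0 \<le> (\<Sum>v\<in>VG. (x v)^2)" by (intro sum_nonneg) auto
      have CS: "Sx^2 \<le> nr * (\<Sum>v\<in>VG. (x v)^2)"
        using cauchy_schwarz_sum[of x VG] cn unfolding Sx_def nr_def by simp
      have dens: "(1 - 1/real k + \<epsilon>/2) * Sx^2 \<le> Pq EG VG x"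
      proof -
        have "(\<alpha> + \<epsilon>/2) * Sx^2 \<le> (\<alpha> + \<epsilon>/2) * (nr * (\<Sum>v\<in>VG. (x v)^2))"
          using CS ahalf ep by (intro mult_left_mono) auto
        also have "\<dots> = ((\<alpha> + \<epsilon>/2) * nr) * (\<Sum>v\<in>VG. (x v)^2)" by simp
        also have "\<dots> \<le> m * (\<Sum>v\<in>VG. (x v)^2)" using mge sq0 by (rule mult_right_mono)
        also have "\<dots> \<le> Pq EG VG x" by (rule q1')
        finally show ?thesis unfolding \<alpha>_def .
      qed
      have lowsq: "c0 * nr^2 \<le> Sx^2"
      proof -
        have "c0 * nr^2 \<le> m * nr"
        proof -
          have "c0 * nr^2 \<le> (1/2) * nr^2" unfolding c0_def by (intro mult_right_mono) auto
          also have "\<dots> \<le> ((\<alpha> + \<epsilon>/2) * nr) * nr" using ahalf ep n1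
            by (simp add: power2_eq_square mult_right_mono)
          also have "\<dots> \<le> m * nr" using mge n1 by (intro mult_right_mono) auto
          finally show ?thesis .
        qed
        moreover have "c0 * nr^2 \<le> 4 * \<tau> * nr^2" unfolding c0_def \<tau>_def
          by (intro mult_right_mono) auto
        ultimately have "c0 * nr^2 \<le> min (m * nr) (4 * \<tau> * nr^2)" by simp
        also have "\<dots> \<le> Pq EG VG x" by (rule q2')
        also have "\<dots> \<le> Sx^2" unfolding Sx_def using x3 by (intro Pq_le_sq) auto
        finally show ?thesis .
      qed
      have "9 \<le> (\<eta>0 * Sx)^2"
      proof -
        have "9 / (\<eta>0^2 * c0) \<le> nr" using nn unfolding n0_def nr_def by linarith
        hence "9 \<le> \<eta>0^2 * c0 * nr" using e0 c0pos by (simp add: field_simps)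
        also have "\<dots> \<le> \<eta>0^2 * c0 * nr^2" using n1 e0 c0pos
          by (intro mult_left_mono) (auto simp: power2_eq_square)
        also have "\<dots> = \<eta>0^2 * (c0 * nr^2)" by simp
        also have "\<dots> \<le> \<eta>0^2 * Sx^2" using lowsq by (intro mult_left_mono) auto
        also have "\<dots> = (\<eta>0 * Sx)^2" by (simp add: power_mult_distrib)
        finally show ?thesis .
      qed
      hence "3^2 \<le> (\<eta>0 * Sx)^2" by simp
      moreover have "0 \<le> \<eta>0 * Sx" using e0 Sx0 by simp
      ultimately have three: "3 \<le> \<eta>0 * Sx" by (rule power2_le_imp_le)
      have Sxpos: "0 < Sx"
      proof (rule ccontr)
        assume "\<not> 0 < Sx"
        hence "Sx = 0" using Sx0 by simp
        thus False using three by simp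
      qed
      have xb': "\<forall>v\<in>VG. 0 \<le> x v \<and> x v \<le> \<eta>0 * sum x VG"
        using x3 three unfolding Sx_def by (meson order_trans)
      have "blowup EG VG k t"
        using xb' by (intro DB[rule_format, OF G _ _ dens[unfolded Sx_def]]) (auto simp: Sxpos[unfolded Sx_def])
      moreover have "finite VG" using G unfolding simple_graph_def by auto
      ultimately have "contains_subgraph VF EF VG EG"
        using embed[OF F col] unfolding t_def by blast
      thus False using fr unfolding free_def by blast
    qed
  qed
qed



end
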